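(* Let $\Bbbk$ be a field, $q\in\Bbbk$ a primitive $n$-th root of unity and $k,\ell,t\in\mathbb{N}_0$ with $k,\ell,t<n$. Then: (i) if $n\le t+\ell$, then for each $0\le m<t$, $$\sum_{s=0}^{m}(-1)^sq^{\frac{s(s+1)}{2}-sm}\binom{t}{m-s}_q\binom{s}{t+\ell-n}_q=(-1)^mq^{-\frac{m(m-1)}{2}-t(t+\ell-m)}\binom{m-t+n}{\ell}_q;$$ (ii) if $\ell\le k$, then $\sum_{s=0}^{\ell}(-1)^sq^{\frac{s(s+1)}{2}-s(\ell-k)}\binom{n+\ell-k}{s}_q=\binom{k}{\ell}_q$; (iii) if $\ell\le k$, then for each $\ell\le m<n$, $$\sum_{s=0}^{m}(-1)^sq^{\frac{s(s+1)}{2}-s(\ell-k)}\binom{n+m-k}{s}_q\binom{n+m-s}{n+\ell-s}_q=\binom{k}{\ell}_q.$$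
   Context: $q$-binomials: for integers $N\ge0$ and $m$, $\binom{0}{0}_q=1$, $\binom{N}{m}_q=0$ if $m>N$ or $m<0$, and for $N\ge1$, $0\le m\le N$, $\binom{N}{m}_q=\binom{N-1}{m-1}_q+q^m\binom{N-1}{m}_q$. *)

theory Defs
  imports Main
begin

text \<open>Lower indices are natural numbers; negative lower indices never occur in the statement.\<close>
fun qbin :: "'a::field \<Rightarrow> nat \<Rightarrow> nat \<Rightarrow> 'a" where
  "qbin q 0 m = (if m = 0 then 1 else 0)"
| "qbin q (Suc N) m =
     (if m > Suc N then 0
      else (if m = 0 then 0 else qbin q N (m - 1)) + q ^ m * qbin q N m)"

definition primitive_root_of_unity :: "'a::field \<Rightarrow> nat \<Rightarrow> bool" where
  "primitive_root_of_unity q n \<longleftrightarrow>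
     0 < n \<and> q ^ n = 1 \<and> (\<forall>j. 0 < j \<and> j < n \<longrightarrow> q ^ j \<noteq> 1)"

end

theory Submission
  imports Defs
begin


lemma qbin_gt: "m > N \<Longrightarrow> qbin q N m = 0"
  by (cases N) auto

lemma qbin_0: "qbin q N 0 = 1"
  by (induction N) auto

lemma qbin_diag: "qbin q N N = 1"
  by (induction N) (auto simp: qbin_gt)

lemma qbin_Suc_Suc: "qbin q (Suc N) (Suc m) = qbin q N m + q ^ Suc m * qbin q N (Suc m)"
  by (auto simp: qbin_gt)

lemma qbin_Suc_0: "qbin q (Suc N) 0 = qbin q N 0"
  by simp

lemma vandermonde:
  "qbin q (c + e) l = (\<Sum>s = 0..l. q ^ ((c - s) * (l - s)) * qbin q c s * qbin q e (l - s))"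
proof (induction c arbitrary: l)
  case 0
  have "(\<Sum>s = 0..l. q ^ ((0 - s) * (l - s)) * qbin q 0 s * qbin q e (l - s))
        = (\<Sum>s \<in> {0}. q ^ ((0 - s) * (l - s)) * qbin q 0 s * qbin q e (l - s))"
    by (rule sum.mono_neutral_right) auto
  then show ?case by simp
next
  case (Suc c)
  show ?case
  proof (cases l)
    case 0
    then show ?thesis by (simp add: qbin_0)
  next
    case (Suc l')
    have "qbin q (Suc c + e) l = qbin q (c + e) l' + q ^ l * qbin q (c + e) l"
      unfolding Suc add_Suc by (rule qbin_Suc_Suc)
    also have "qbin q (c + e) l' = (\<Sum>s = 0..l'. q ^ ((c - s) * (l' - s)) * qbin q c s * qbin q e (l' - s))"
      by (rule Suc.IH)
    also have "\<dots> = (\<Sum>s = 1..l. q ^ ((Suc c - s) * (l - s)) * qbin q c (s - 1) * qbin q e (l - s))"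
      using Suc by (simp add: sum.atLeast_Suc_atMost_Suc_shift del: sum.cl_ivl_Suc)
    also have "\<dots> = (\<Sum>s = 0..l. q ^ ((Suc c - s) * (l - s)) * (if s = 0 then 0 else qbin q c (s - 1)) * qbin q e (l - s))"
      by (simp add: sum.atLeast_Suc_atMost[of 0 l] del: sum.cl_ivl_Suc)
    also have "q ^ l * qbin q (c + e) l = (\<Sum>s = 0..l. q ^ ((Suc c - s) * (l - s)) * (q ^ s * qbin q c s) * qbin q e (l - s))"
    proof -
      have "q ^ l * qbin q (c + e) l = (\<Sum>s = 0..l. q ^ l * (q ^ ((c - s) * (l - s)) * qbin q c s * qbin q e (l - s)))"
        by (simp add: Suc.IH sum_distrib_left)
      also have "\<dots> = (\<Sum>s = 0..l. q ^ ((Suc c - s) * (l - s)) * (q ^ s * qbin q c s) * qbin q e (l - s))"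
      proof (rule sum.cong[OF refl])
        fix s assume "s \<in> {0..l}"
        then have sl: "s \<le> l" by simp
        show "q ^ l * (q ^ ((c - s) * (l - s)) * qbin q c s * qbin q e (l - s)) =
              q ^ ((Suc c - s) * (l - s)) * (q ^ s * qbin q c s) * qbin q e (l - s)"
        proof (cases "s \<le> c")
          case True
          have "l + (c - s) * (l - s) = (Suc c - s) * (l - s) + s"
            using True sl by (simp add: Suc_diff_le algebra_simps)
          then have "q ^ l * q ^ ((c - s) * (l - s)) = q ^ ((Suc c - s) * (l - s)) * q ^ s"
            by (simp add: power_add[symmetric])
          then show ?thesis by (simp add: algebra_simps)
        next
          case False
          then show ?thesis by (simp add: qbin_gt)
        qed
      qed
      finally show ?thesis .
    qed
    finally have "qbin q (Suc c + e) l = (\<Sum>s = 0..l. q ^ ((Suc c - s) * (l - s)) * ((if s = 0 then 0 else qbin q c (s - 1)) + q ^ s * qbin q c s) * qbin q e (l - s))"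
      by (simp add: sum.distrib[symmetric] algebra_simps)
    also have "\<dots> = (\<Sum>s = 0..l. q ^ ((Suc c - s) * (l - s)) * qbin q (Suc c) s * qbin q e (l - s))"
    proof (rule sum.cong[OF refl])
      fix s assume "s \<in> {0..l}"
      show "q ^ ((Suc c - s) * (l - s)) * ((if s = 0 then 0 else qbin q c (s - 1)) + q ^ s * qbin q c s) * qbin q e (l - s) =
            q ^ ((Suc c - s) * (l - s)) * qbin q (Suc c) s * qbin q e (l - s)"
        by (cases "s > Suc c") (auto simp: qbin_gt)
    qed
    finally show ?thesis .
  qed
qed

lemma qbin_one: "qbin q (Suc 0) j = (if j \<le> 1 then 1 else 0)"
  by (cases j) auto

lemma pascal2: "qbin q (Suc N) (Suc m) = q ^ (N - m) * qbin q N m + qbin q N (Suc m)"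
proof -
  have "qbin q (Suc N) (Suc m) = qbin q (N + 1) (Suc m)" by simp
  also have "\<dots> = (\<Sum>s = 0..Suc m. q ^ ((N - s) * (Suc m - s)) * qbin q N s * qbin q 1 (Suc m - s))"
    by (rule vandermonde)
  also have "\<dots> = (\<Sum>s<m. q ^ ((N - s) * (Suc m - s)) * qbin q N s * qbin q 1 (Suc m - s))
      + q ^ (N - m) * qbin q N m + qbin q N (Suc m)"
    by (simp add: atLeast0AtMost lessThan_Suc_atMost[symmetric] qbin_one)
  also have "(\<Sum>s<m. q ^ ((N - s) * (Suc m - s)) * qbin q N s * qbin q 1 (Suc m - s)) = 0"
    by (rule sum.neutral) (auto simp: qbin_one)
  finally show ?thesis by simp
qed

lemma ratio2: "qbin q (Suc M) (Suc L) * (1 - q ^ Suc L) = (1 - q ^ Suc M) * qbin q M L"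
proof (cases "L \<le> M")
  case True
  have a: "qbin q (Suc M) (Suc L) = qbin q M L + q ^ Suc L * qbin q M (Suc L)"
    by (rule qbin_Suc_Suc)
  have b: "qbin q (Suc M) (Suc L) = q ^ (M - L) * qbin q M L + qbin q M (Suc L)"
    by (rule pascal2)
  have c: "q ^ Suc L * q ^ (M - L) = q ^ Suc M"
    using True by (simp add: power_add[symmetric])
  have "qbin q (Suc M) (Suc L) * (1 - q ^ Suc L) = qbin q (Suc M) (Suc L) - q ^ Suc L * qbin q (Suc M) (Suc L)"
    by (simp add: algebra_simps)
  also have "\<dots> = (qbin q M L + q ^ Suc L * qbin q M (Suc L)) - q ^ Suc L * (q ^ (M - L) * qbin q M L + qbin q M (Suc L))"
    using a b by metis
  also have "\<dots> = qbin q M L - (q ^ Suc L * q ^ (M - L)) * qbin q M L"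
    by (simp add: algebra_simps)
  also have "\<dots> = qbin q M L - q ^ Suc M * qbin q M L" by (simp only: c)
  also have "\<dots> = (1 - q ^ Suc M) * qbin q M L" by (simp add: algebra_simps)
  finally show ?thesis .
next
  case False
  then show ?thesis by (simp add: qbin_gt)
qed

lemma ratio1: "qbin q N (Suc L) * (1 - q ^ Suc L) = (1 - q ^ (N - L)) * qbin q N L"
proof -
  have a: "qbin q (Suc N) (Suc L) = qbin q N L + q ^ Suc L * qbin q N (Suc L)"
    by (rule qbin_Suc_Suc)
  have b: "qbin q (Suc N) (Suc L) = q ^ (N - L) * qbin q N L + qbin q N (Suc L)"
    by (rule pascal2)
  from a b have "qbin q N L + q ^ Suc L * qbin q N (Suc L) = q ^ (N - L) * qbin q N L + qbin q N (Suc L)"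
    by simp
  then show ?thesis by (simp add: algebra_simps)
qed

lemma prim_nonzero: "primitive_root_of_unity q n \<Longrightarrow> q \<noteq> 0"
  unfolding primitive_root_of_unity_def by (metis power_0_left zero_neq_one gr0_conv_Suc)

lemma prim_zero:
  assumes "primitive_root_of_unity q n" "0 < j" "j < n"
  shows "qbin q n j = 0"
proof -
  obtain M where M: "n = Suc M" using assms by (cases n) auto
  obtain L where L: "j = Suc L" using assms by (cases j) auto
  have "qbin q n j * (1 - q ^ j) = (1 - q ^ n) * qbin q M L"
    using ratio2[of q M L] M L by simp
  also have "\<dots> = 0" using assms(1) by (simp add: primitive_root_of_unity_def)
  finally have "qbin q n j * (1 - q ^ j) = 0" .
  moreover have "1 - q ^ j \<noteq> 0" using assms by (simp add: primitive_root_of_unity_def)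
  ultimately show ?thesis by simp
qed

lemma lucas:
  assumes "primitive_root_of_unity q n"
  shows "qbin q (n + a) b = qbin q a b + (if n \<le> b then qbin q a (b - n) else 0)"
proof -
  have qn: "q ^ n = 1" using assms by (simp add: primitive_root_of_unity_def)
  have n0: "0 < n" using assms by (simp add: primitive_root_of_unity_def)
  let ?f = "\<lambda>s. q ^ ((n - s) * (b - s)) * qbin q n s * qbin q a (b - s)"
  have V: "qbin q (n + a) b = (\<Sum>s = 0..b. ?f s)" by (rule vandermonde)
  have f0: "?f 0 = qbin q a b"
    by (simp add: qbin_0 power_mult qn)
  have fz: "?f s = 0" if "s \<noteq> 0" "s \<noteq> n" for s
  proof (cases "s < n")
    case True
    then show ?thesis using prim_zero[OF assms, of s] that by simp
  next
    case False
    then show ?thesis using that by (simp add: qbin_gt)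
  qed
  show ?thesis
  proof (cases "n \<le> b")
    case True
    have "(\<Sum>s = 0..b. ?f s) = (\<Sum>s \<in> {0, n}. ?f s)"
    proof (rule sum.mono_neutral_right)
      show "\<forall>s\<in>{0..b} - {0, n}. ?f s = 0" by (intro ballI fz) auto
    qed (use True in auto)
    also have "\<dots> = qbin q a b + qbin q a (b - n)"
      using n0 f0 by (simp add: qbin_diag)
    finally show ?thesis using V True by simp
  next
    case False
    have "(\<Sum>s = 0..b. ?f s) = (\<Sum>s \<in> {0}. ?f s)"
    proof (rule sum.mono_neutral_right)
      show "\<forall>s\<in>{0..b} - {0}. ?f s = 0" using False by (intro ballI fz) auto
    qed auto
    then show ?thesis using V False f0 by simp
  qed
qed

lemma qbin_sym: "k \<le> N \<Longrightarrow> qbin q N k = qbin q N (N - k)"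
proof (induction N arbitrary: k)
  case 0
  then show ?case by simp
next
  case (Suc N)
  show ?case
  proof (cases k)
    case 0
    then show ?thesis by (simp add: qbin_0 qbin_diag del: qbin.simps)
  next
    case (Suc k')
    show ?thesis
    proof (cases "k' = N")
      case True
      then show ?thesis using Suc by (simp add: qbin_0 qbin_diag del: qbin.simps)
    next
      case False
      then have kN: "k' < N" using Suc \<open>k \<le> Suc N\<close> by simp
      then obtain r where r: "N - k' = Suc r" by (metis Suc_diff_Suc)
      have "qbin q (Suc N) k = qbin q N k' + q ^ k * qbin q N k"
        unfolding Suc by (rule qbin_Suc_Suc)
      also have "\<dots> = qbin q N (N - k') + q ^ k * qbin q N (N - k)"
        using Suc.IH[of k'] Suc.IH[of k] kN Suc by simp
      finally have A: "qbin q (Suc N) k = qbin q N (N - k') + q ^ k * qbin q N (N - k)" .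
      have "qbin q (Suc N) (Suc N - k) = qbin q (Suc N) (Suc r)"
        using Suc r by simp
      also have "\<dots> = q ^ (N - r) * qbin q N r + qbin q N (Suc r)"
        by (rule pascal2)
      finally have B: "qbin q (Suc N) (Suc N - k) = q ^ (N - r) * qbin q N r + qbin q N (Suc r)" .
      have e1: "N - k = r" "N - r = k" "N - k' = Suc r" using r Suc kN by auto
      show ?thesis using A B unfolding e1 by (simp add: algebra_simps del: qbin.simps)
    qed
  qed
qed

lemma tri_Suc: "Suc L * (Suc L + 1) div 2 = L * (L + 1) div 2 + Suc L"
proof -
  have "Suc L * (Suc L + 1) = L * (L + 1) + 2 * Suc L" by simp
  then show ?thesis by simp
qed

lemma powi_cong:
  assumes "q \<noteq> 0" "q ^ n = 1" "a = b + int n * c"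
  shows "q powi a = (q::'a::field) powi b"
proof -
  have "q powi (int n * c) = 1"
    by (simp add: power_int_mult assms(2))
  then show ?thesis using assms by (simp add: power_int_add)
qed

lemma refl_lemma:
  assumes "primitive_root_of_unity q n" "j + L < n"
  shows "qbin q (j + L) L = (-1) ^ L * q powi (int (j * L) + int (L * (L + 1) div 2)) * qbin q (n - 1 - j) L"
  using assms(2)
proof (induction L)
  case 0
  then show ?case by (simp add: qbin_0)
next
  case (Suc L)
  have q0: "q \<noteq> 0" using prim_nonzero[OF assms(1)] .
  have qn: "q ^ n = 1" using assms(1) by (simp add: primitive_root_of_unity_def)
  define X where "X = int (j * L) + int (L * (L + 1) div 2)"
  define w where "w = q ^ Suc (j + L)"
  define z where "z = q ^ (n - 1 - j - L)"
  define u where "u = 1 - q ^ Suc L"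
  have wz: "w * z = 1"
  proof -
    have "Suc (j + L) + (n - 1 - j - L) = n" using Suc.prems by simp
    then show ?thesis unfolding w_def z_def by (metis power_add qn)
  qed
  have u0: "u \<noteq> 0"
  proof -
    have "q ^ Suc L \<noteq> 1" using assms(1) Suc.prems unfolding primitive_root_of_unity_def
      by (metis add_Suc_right le_add2 le_less_trans zero_less_Suc)
    then show ?thesis unfolding u_def by simp
  qed
  have IH: "qbin q (j + L) L = (-1) ^ L * q powi X * qbin q (n - 1 - j) L"
    using Suc X_def by simp
  have r2: "qbin q (j + Suc L) (Suc L) * u = (1 - w) * qbin q (j + L) L"
    unfolding u_def w_def using ratio2[of q "j + L" L] by simp
  have r1: "qbin q (n - 1 - j) (Suc L) * u = (1 - z) * qbin q (n - 1 - j) L"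
    unfolding u_def z_def using ratio1[of q "n - 1 - j" L] by (simp add: diff_diff_add)
  have ex: "int (j * Suc L) + int (Suc L * (Suc L + 1) div 2) = X + int (Suc (j + L))"
    unfolding X_def tri_Suc by simp
  have P: "q powi (X + int (Suc (j + L))) = q powi X * w"
    unfolding w_def using q0 by (simp add: power_int_add power_add)
  have "qbin q (j + Suc L) (Suc L) * u = (-1) ^ Suc L * q powi (X + int (Suc (j + L))) * qbin q (n - 1 - j) (Suc L) * u"
  proof -
    have "(-1) ^ Suc L * q powi (X + int (Suc (j + L))) * qbin q (n - 1 - j) (Suc L) * u
        = - ((-1) ^ L * q powi X * w * (1 - z) * qbin q (n - 1 - j) L)"
    proof -
      have "(-1) ^ Suc L * q powi (X + int (Suc (j + L))) * qbin q (n - 1 - j) (Suc L) * u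
          = (-1) ^ Suc L * (q powi X * w) * (qbin q (n - 1 - j) (Suc L) * u)"
        unfolding P by (simp only: mult.assoc)
      also have "\<dots> = (-1) ^ Suc L * (q powi X * w) * ((1 - z) * qbin q (n - 1 - j) L)"
        by (simp only: r1)
      finally show ?thesis by (simp add: algebra_simps)
    qed
    also have "\<dots> = (-1) ^ L * q powi X * (w * z - w) * qbin q (n - 1 - j) L"
      by (simp add: algebra_simps)
    also have "\<dots> = (1 - w) * qbin q (j + L) L"
      unfolding wz IH by (simp add: algebra_simps)
    finally show ?thesis using r2 by simp
  qed
  then have "qbin q (j + Suc L) (Suc L) = (-1) ^ Suc L * q powi (X + int (Suc (j + L))) * qbin q (n - 1 - j) (Suc L)"
    using u0 mult_right_cancel by blast
  then show ?case unfolding ex .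
qed



lemma tri_int: "2 * int (x * (x + 1) div 2) = int x * (int x + 1)"
proof -
  have "even (x * (x + 1))" by simp
  then have "2 * (x * (x + 1) div 2) = x * (x + 1)" by simp
  then have "int (2 * (x * (x + 1) div 2)) = int (x * (x + 1))" by simp
  then show ?thesis by (metis of_nat_1 of_nat_add of_nat_mult of_nat_numeral)
qed

lemma ex3:
  fixes Ts Tls Tl s l k m n :: int
  assumes "2*Ts = s*(s+1)" "2*Tls = (l-s)*(l-s+1)" "2*Tl = l*(l+1)"
  shows "Ts - s*(l-k) + ((m-l)*(l-s) + Tls) = (n+m-k-s)*(l-s) + ((k-l)*l + Tl) + n*(-(l-s))"
proof -
  have "2*(Ts - s*(l-k) + ((m-l)*(l-s) + Tls)) = 2*((n+m-k-s)*(l-s) + ((k-l)*l + Tl) + n*(-(l-s)))"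
    using assms by algebra
  then show ?thesis by simp
qed

lemma part3:
  fixes q :: "'a::field"
  assumes prim: "primitive_root_of_unity q n" and "k < n" "l \<le> k" "l \<le> m" "m < n"
  shows "(\<Sum>s = 0..m. (-1) ^ s
                  * q powi (int (s * (s + 1) div 2) - int s * (int l - int k))
                  * qbin q (n + m - k) s * qbin q (n + m - s) (n + l - s)) = qbin q k l"
proof -
  have q0: "q \<noteq> 0" by (rule prim_nonzero[OF prim])
  have qn: "q ^ n = 1" using prim by (simp add: primitive_root_of_unity_def)
  define N where "N = n + m - k"
  define e where "e = n - 1 - (m - l)"
  define R where "R = int ((k - l) * l) + int (l * (l + 1) div 2)"
  define E where "E = (\<lambda>s::nat. int (s * (s + 1) div 2) - int s * (int l - int k))"
  define g where "g = (\<lambda>s. (-1) ^ s * q powi E s * qbin q N s * qbin q (m - s) (l - s))"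
  have luc: "qbin q (n + m - s) (n + l - s) = (if s \<le> l then qbin q (m - s) (l - s) else 0)"
    if "s \<le> m" for s
  proof -
    have "qbin q (n + m - s) (n + l - s) = qbin q (n + (m - s)) (n + l - s)"
      using that by (simp add: add_diff_assoc)
    also have "\<dots> = qbin q (m - s) (n + l - s) + (if n \<le> n + l - s then qbin q (m - s) (n + l - s - n) else 0)"
      by (rule lucas[OF prim])
    also have "qbin q (m - s) (n + l - s) = 0"
      by (rule qbin_gt) (use assms that in auto)
    finally have A: "qbin q (n + m - s) (n + l - s) = 0 + (if n \<le> n + l - s then qbin q (m - s) (n + l - s - n) else 0)" .
    have B: "(n \<le> n + l - s) = (s \<le> l)" using assms that by auto
    have C: "n + l - s - n = l - s" by simp
    show ?thesis using A unfolding B C by simp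
  qed
  have step1: "(\<Sum>s = 0..m. (-1) ^ s
                  * q powi (int (s * (s + 1) div 2) - int s * (int l - int k))
                  * qbin q (n + m - k) s * qbin q (n + m - s) (n + l - s)) = (\<Sum>s = 0..l. g s)"
  proof (rule sum.mono_neutral_cong_right)
    show "{0..l} \<subseteq> {0..m}" using assms by auto
    show "\<forall>i\<in>{0..m} - {0..l}. (-1) ^ i * q powi (int (i * (i + 1) div 2) - int i * (int l - int k))
                  * qbin q (n + m - k) i * qbin q (n + m - i) (n + l - i) = 0"
      using luc by auto
    show "(-1) ^ x * q powi (int (x * (x + 1) div 2) - int x * (int l - int k))
                  * qbin q (n + m - k) x * qbin q (n + m - x) (n + l - x) = g x" if "x \<in> {0..l}" for x
      using that luc[of x] assms unfolding g_def E_def N_def by auto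
  qed simp
  have step2: "g s = (-1) ^ l * q powi R * (q ^ ((N - s) * (l - s)) * qbin q N s * qbin q e (l - s))"
    if "s \<in> {0..l}" for s
  proof -
    have sl: "s \<le> l" using that by simp
    have rf: "qbin q (m - s) (l - s) = (-1) ^ (l - s) * q powi (int ((m - l) * (l - s)) + int ((l - s) * (l - s + 1) div 2)) * qbin q e (l - s)"
    proof -
      have "qbin q (m - s) (l - s) = qbin q ((m - l) + (l - s)) (l - s)"
        using sl assms by simp
      also have "\<dots> = (-1) ^ (l - s) * q powi (int ((m - l) * (l - s)) + int ((l - s) * (l - s + 1) div 2)) * qbin q (n - 1 - (m - l)) (l - s)"
        by (rule refl_lemma[OF prim]) (use sl assms in auto)
      finally show ?thesis unfolding e_def .
    qed
    have sg: "(-1) ^ s * (-1) ^ (l - s) = ((-1) ^ l :: 'a)"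
      using sl by (simp add: power_add[symmetric])
    have ie: "E s + (int ((m - l) * (l - s)) + int ((l - s) * (l - s + 1) div 2))
        = (int ((N - s) * (l - s)) + R) + int n * (- (int l - int s))"
    proof -
      have c1: "int ((N - s) * (l - s)) = (int n + int m - int k - int s) * (int l - int s)"
        unfolding N_def using sl assms by (simp add: of_nat_diff)
      have c2: "int ((m - l) * (l - s)) = (int m - int l) * (int l - int s)"
        using sl assms by (simp add: of_nat_diff)
      have c3: "int ((k - l) * l) = (int k - int l) * int l"
        using assms by (simp add: of_nat_diff)
      have t1: "2 * int ((l - s) * (l - s + 1) div 2) = (int l - int s) * (int l - int s + 1)"
        using tri_int[of "l - s"] sl by (simp add: of_nat_diff)
      show ?thesis
        unfolding E_def R_def c1 c2 c3
        by (rule ex3[OF tri_int t1 tri_int])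
    qed
    have pw: "q powi E s * q powi (int ((m - l) * (l - s)) + int ((l - s) * (l - s + 1) div 2))
           = q powi R * q ^ ((N - s) * (l - s))"
    proof -
      have "q powi E s * q powi (int ((m - l) * (l - s)) + int ((l - s) * (l - s + 1) div 2))
          = q powi (E s + (int ((m - l) * (l - s)) + int ((l - s) * (l - s + 1) div 2)))"
        using q0 by (simp add: power_int_add)
      also have "\<dots> = q powi (int ((N - s) * (l - s)) + R)"
        by (rule powi_cong[OF q0 qn ie])
      also have "\<dots> = q powi R * q ^ ((N - s) * (l - s))"
        using q0 by (simp add: power_int_add del: of_nat_mult)
      finally show ?thesis .
    qed
    have "g s = ((-1) ^ s * (-1) ^ (l - s)) * (q powi E s * q powi (int ((m - l) * (l - s)) + int ((l - s) * (l - s + 1) div 2))) * qbin q N s * qbin q e (l - s)"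
      unfolding g_def rf by (simp add: algebra_simps)
    also have "\<dots> = (-1) ^ l * q powi R * (q ^ ((N - s) * (l - s)) * qbin q N s * qbin q e (l - s))"
      unfolding sg pw by (simp add: algebra_simps)
    finally show ?thesis .
  qed
  have "(\<Sum>s = 0..l. g s) = (-1) ^ l * q powi R * qbin q (N + e) l"
    by (simp add: step2 sum_distrib_left[symmetric] vandermonde)
  also have "N + e = n + (n - 1 - (k - l))"
    unfolding N_def e_def using assms by simp
  also have "qbin q (n + (n - 1 - (k - l))) l = qbin q (n - 1 - (k - l)) l"
    using lucas[OF prim, of "n - 1 - (k - l)" l] assms by simp
  also have "(-1) ^ l * q powi R * qbin q (n - 1 - (k - l)) l = qbin q k l"
  proof -
    have "qbin q k l = qbin q ((k - l) + l) l" using assms by simp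
    also have "\<dots> = (-1) ^ l * q powi R * qbin q (n - 1 - (k - l)) l"
      unfolding R_def by (rule refl_lemma[OF prim]) (use assms in auto)
    finally show ?thesis by simp
  qed
  finally show ?thesis using step1 by simp
qed

lemma part2:
  fixes q :: "'a::field"
  assumes prim: "primitive_root_of_unity q n" and "k < n" "l \<le> k"
  shows "(\<Sum>s = 0..l. (-1) ^ s
                  * q powi (int (s * (s + 1) div 2) - int s * (int l - int k))
                  * qbin q (n + l - k) s) = qbin q k l"
proof -
  have "(\<Sum>s = 0..l. (-1) ^ s
                  * q powi (int (s * (s + 1) div 2) - int s * (int l - int k))
                  * qbin q (n + l - k) s) = (\<Sum>s = 0..l. (-1) ^ s
                  * q powi (int (s * (s + 1) div 2) - int s * (int l - int k))
                  * qbin q (n + l - k) s * qbin q (n + l - s) (n + l - s))"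
    by (simp add: qbin_diag)
  also have "\<dots> = qbin q k l"
    by (rule part3[OF prim]) (use assms in auto)
  finally show ?thesis .
qed

lemma tri_int2: "2 * int (m * (m - 1) div 2) = int m * (int m - 1)"
proof (cases m)
  case 0
  then show ?thesis by simp
next
  case (Suc x)
  have "m * (m - 1) = (m - 1) * (m - 1 + 1)" using Suc by simp
  then have "2 * int (m * (m - 1) div 2) = int (m - 1) * (int (m - 1) + 1)"
    using tri_int[of "m - 1"] by simp
  then show ?thesis using Suc by simp
qed

lemma ex1a:
  fixes Tdu Tu Td d u m n :: int
  assumes "2*Tdu = (d+u)*(d+u+1)" "2*Tu = u*(u+1)" "2*Td = d*(d+1)"
  shows "Tdu - (d+u)*m + (d*u + Tu) = (n-1-d-u)*(m-d-u) + (m - Td) + n*(-(m-d-u))"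
proof -
  have "2*(Tdu - (d+u)*m + (d*u + Tu)) = 2*((n-1-d-u)*(m-d-u) + (m - Td) + n*(-(m-d-u)))"
    using assms by algebra
  then show ?thesis by simp
qed

lemma ex1b:
  fixes Td TK Tm t l m n :: int
  assumes "2*Td = (t+l-n)*(t+l-n+1)" "2*TK = (m-(t+l-n))*(m-(t+l-n)+1)" "2*Tm = m*(m-1)"
  shows "(m - Td) + -(l*(m-(t+l-n)) + TK) = (- Tm - t*(t+l-m)) + n*(2*t+l-n-m)"
proof -
  have "2*((m - Td) + -(l*(m-(t+l-n)) + TK)) = 2*((- Tm - t*(t+l-m)) + n*(2*t+l-n-m))"
    using assms by algebra
  then show ?thesis by simp
qed

lemma part1:
  fixes q :: "'a::field"
  assumes prim: "primitive_root_of_unity q n" and "l < n" "t < n" "n \<le> t + l" "m < t"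
  shows "(\<Sum>s = 0..m. (-1) ^ s
                  * q powi (int (s * (s + 1) div 2) - int s * int m)
                  * qbin q t (m - s) * qbin q s (t + l - n))
              = (-1) ^ m * q powi (- int (m * (m - 1) div 2) - int t * (int t + int l - int m))
                  * qbin q (m + n - t) l"
proof -
  have q0: "q \<noteq> 0" by (rule prim_nonzero[OF prim])
  have qn: "q ^ n = 1" using prim by (simp add: primitive_root_of_unity_def)
  define d where "d = t + l - n"
  define f where "f = (\<lambda>s. (-1) ^ s * q powi (int (s * (s + 1) div 2) - int s * int m)
                  * qbin q t (m - s) * qbin q s d)"
  show ?thesis
  proof (cases "m < d")
    case True
    have "(\<Sum>s = 0..m. f s) = 0"
      by (rule sum.neutral) (use True in \<open>auto simp: f_def qbin_gt\<close>)
    moreover have "qbin q (m + n - t) l = 0"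
      by (rule qbin_gt) (use True assms in \<open>auto simp: d_def\<close>)
    ultimately show ?thesis unfolding f_def d_def by simp
  next
    case False
    then have dm: "d \<le> m" by simp
    define K where "K = m - d"
    define e where "e = n - 1 - d"
    define C0 where "C0 = int m - int (d * (d + 1) div 2)"
    have "(\<Sum>s = 0..m. f s) = (\<Sum>s = d..m. f s)"
      by (rule sum.mono_neutral_right) (auto simp: f_def qbin_gt)
    also have "\<dots> = (\<Sum>u = 0..K. f (u + d))"
      using sum.shift_bounds_cl_nat_ivl[of f 0 d K] dm unfolding K_def by simp
    also have "\<dots> = (\<Sum>u = 0..K. (-1) ^ d * q powi C0 * (q ^ ((e - u) * (K - u)) * qbin q e u * qbin q t (K - u)))"
    proof (rule sum.cong[OF refl])
      fix u assume "u \<in> {0..K}"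
      then have uK: "u \<le> K" by simp
      have sym: "qbin q (u + d) d = qbin q (d + u) u"
        using qbin_sym[of d "u + d" q] by (simp add: add.commute)
      have rf: "qbin q (d + u) u = (-1) ^ u * q powi (int (d * u) + int (u * (u + 1) div 2)) * qbin q e u"
        unfolding e_def by (rule refl_lemma[OF prim]) (use uK dm assms in \<open>auto simp: K_def d_def\<close>)
      have ms: "m - (u + d) = K - u" unfolding K_def by simp
      have sg: "(-1) ^ (u + d) * (-1) ^ u = ((-1) ^ d :: 'a)"
        by (simp add: power_add algebra_simps flip: power_mult_distrib)
      have ie: "(int ((u + d) * (u + d + 1) div 2) - int (u + d) * int m) + (int (d * u) + int (u * (u + 1) div 2))
          = int ((e - u) * (K - u)) + C0 + int n * (- (int m - int d - int u))"
      proof -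
        have c1: "int ((e - u) * (K - u)) = (int n - 1 - int d - int u) * (int m - int d - int u)"
          unfolding e_def K_def using uK dm assms by (simp add: of_nat_diff K_def d_def, simp add: algebra_simps)
        have h: "2 * int ((u + d) * (u + d + 1) div 2) = (int d + int u) * (int d + int u + 1)"
          using tri_int[of "u + d"] by (simp add: algebra_simps)
        show ?thesis unfolding c1 C0_def
          using ex1a[OF h tri_int[of u] tri_int[of d], of "int n" "int m"] by (simp add: algebra_simps)
      qed
      have pw: "q powi (int ((u + d) * (u + d + 1) div 2) - int (u + d) * int m) * q powi (int (d * u) + int (u * (u + 1) div 2))
          = q powi C0 * q ^ ((e - u) * (K - u))"
      proof -
        have "q powi (int ((u + d) * (u + d + 1) div 2) - int (u + d) * int m) * q powi (int (d * u) + int (u * (u + 1) div 2))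
            = q powi ((int ((u + d) * (u + d + 1) div 2) - int (u + d) * int m) + (int (d * u) + int (u * (u + 1) div 2)))"
          using q0 by (simp add: power_int_add)
        also have "\<dots> = q powi (int ((e - u) * (K - u)) + C0)"
          by (rule powi_cong[OF q0 qn ie])
        also have "\<dots> = q powi C0 * q ^ ((e - u) * (K - u))"
          using q0 by (simp add: power_int_add del: of_nat_mult)
        finally show ?thesis .
      qed
      have "f (u + d) = ((-1) ^ (u + d) * (-1) ^ u) * (q powi (int ((u + d) * (u + d + 1) div 2) - int (u + d) * int m) * q powi (int (d * u) + int (u * (u + 1) div 2))) * qbin q e u * qbin q t (K - u)"
        unfolding f_def ms sym rf by (simp add: algebra_simps)
      also have "\<dots> = (-1) ^ d * q powi C0 * (q ^ ((e - u) * (K - u)) * qbin q e u * qbin q t (K - u))"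
        unfolding sg pw by (simp add: algebra_simps)
      finally show "f (u + d) = (-1) ^ d * q powi C0 * (q ^ ((e - u) * (K - u)) * qbin q e u * qbin q t (K - u))" .
    qed
    also have "\<dots> = (-1) ^ d * q powi C0 * qbin q (e + t) K"
      by (simp add: sum_distrib_left[symmetric] vandermonde)
    also have "e + t = n + (n - 1 - l)"
      unfolding e_def d_def using assms by simp
    also have "qbin q (n + (n - 1 - l)) K = qbin q (n - 1 - l) K"
      using lucas[OF prim, of "n - 1 - l" K] assms by (simp add: K_def d_def)
    also have "qbin q (n - 1 - l) K = (-1) ^ K * q powi (- (int (l * K) + int (K * (K + 1) div 2))) * qbin q (m + n - t) l"
    proof -
      have lK: "l + K = m + n - t" unfolding K_def d_def using dm assms by (simp add: d_def)
      have r: "qbin q (l + K) K = (-1) ^ K * q powi (int (l * K) + int (K * (K + 1) div 2)) * qbin q (n - 1 - l) K"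
        by (rule refl_lemma[OF prim]) (use lK assms in auto)
      have s: "qbin q (l + K) K = qbin q (l + K) l"
        using qbin_sym[of l "l + K" q] by simp
      have inv: "q powi (- X) * q powi X = 1" for X
        using q0 by (simp add: power_int_minus)
      have sq: "((-1) ^ K * (-1) ^ K :: 'a) = 1"
        by (simp flip: power_add)
      have "(-1) ^ K * q powi (- (int (l * K) + int (K * (K + 1) div 2))) * qbin q (l + K) K
         = ((-1) ^ K * (-1) ^ K) * (q powi (- (int (l * K) + int (K * (K + 1) div 2))) * q powi (int (l * K) + int (K * (K + 1) div 2))) * qbin q (n - 1 - l) K"
        unfolding r by (simp add: algebra_simps)
      also have "\<dots> = qbin q (n - 1 - l) K" unfolding sq inv by simp
      finally have X: "(-1) ^ K * q powi (- (int (l * K) + int (K * (K + 1) div 2))) * qbin q (l + K) K = qbin q (n - 1 - l) K" .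
      show ?thesis using X[unfolded s, unfolded lK] by simp
    qed
    finally have L: "(\<Sum>s = 0..m. f s) = ((-1) ^ d * (-1) ^ K) * (q powi C0 * q powi (- (int (l * K) + int (K * (K + 1) div 2)))) * qbin q (m + n - t) l"
      by (simp add: algebra_simps)
    have sg: "((-1) ^ d * (-1) ^ K :: 'a) = (-1) ^ m"
      unfolding K_def using dm by (simp flip: power_add)
    have ie: "C0 + - (int (l * K) + int (K * (K + 1) div 2)) = (- int (m * (m - 1) div 2) - int t * (int t + int l - int m)) + int n * (2 * int t + int l - int n - int m)"
    proof -
      have c1: "int d = int t + int l - int n" unfolding d_def using assms by (simp add: of_nat_diff)
      have c2: "int K = int m - (int t + int l - int n)" unfolding K_def using dm c1 by (simp add: of_nat_diff)
      have h1: "2 * int (d * (d + 1) div 2) = (int t + int l - int n) * (int t + int l - int n + 1)"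
        using tri_int[of d] c1 by simp
      have h2: "2 * int (K * (K + 1) div 2) = (int m - (int t + int l - int n)) * (int m - (int t + int l - int n) + 1)"
        using tri_int[of K] c2 by simp
      show ?thesis unfolding C0_def of_nat_mult c2
        using ex1b[OF h1 h2 tri_int2[of m]] by (simp add: algebra_simps)
    qed
    have pw: "q powi C0 * q powi (- (int (l * K) + int (K * (K + 1) div 2)))
        = q powi (- int (m * (m - 1) div 2) - int t * (int t + int l - int m))"
    proof -
      have "q powi C0 * q powi (- (int (l * K) + int (K * (K + 1) div 2))) = q powi (C0 + - (int (l * K) + int (K * (K + 1) div 2)))"
        using q0 by (simp add: power_int_add)
      also have "\<dots> = q powi (- int (m * (m - 1) div 2) - int t * (int t + int l - int m))"
        by (rule powi_cong[OF q0 qn ie])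
      finally show ?thesis .
    qed
    show ?thesis using L[unfolded sg pw, unfolded f_def d_def] by simp
  qed
qed


theorem lemma2p5:
  fixes q :: "'a::field" and n k l t :: nat
  assumes "primitive_root_of_unity q n"
    and "k < n" and "l < n" and "t < n"
  shows "(n \<le> t + l \<longrightarrow>
           (\<forall>m < t.
              (\<Sum>s = 0..m. (-1) ^ s
                  * q powi (int (s * (s + 1) div 2) - int s * int m)
                  * qbin q t (m - s) * qbin q s (t + l - n))
              = (-1) ^ m * q powi (- int (m * (m - 1) div 2) - int t * (int t + int l - int m))
                  * qbin q (m + n - t) l))
       \<and> (l \<le> k \<longrightarrow>
           (\<Sum>s = 0..l. (-1) ^ s
                  * q powi (int (s * (s + 1) div 2) - int s * (int l - int k))
                  * qbin q (n + l - k) s) = qbin q k l)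
       \<and> (l \<le> k \<longrightarrow>
           (\<forall>m. l \<le> m \<and> m < n \<longrightarrow>
              (\<Sum>s = 0..m. (-1) ^ s
                  * q powi (int (s * (s + 1) div 2) - int s * (int l - int k))
                  * qbin q (n + m - k) s * qbin q (n + m - s) (n + l - s)) = qbin q k l))"
proof (intro conjI impI allI)
  show "(\<Sum>s = 0..m. (-1) ^ s
                  * q powi (int (s * (s + 1) div 2) - int s * int m)
                  * qbin q t (m - s) * qbin q s (t + l - n))
              = (-1) ^ m * q powi (- int (m * (m - 1) div 2) - int t * (int t + int l - int m))
                  * qbin q (m + n - t) l" if "n \<le> t + l" "m < t" for m
    by (rule part1) (use assms that in auto)
next
  assume "l \<le> k"
  then show "(\<Sum>s = 0..l. (-1) ^ s
                  * q powi (int (s * (s + 1) div 2) - int s * (int l - int k))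
                  * qbin q (n + l - k) s) = qbin q k l"
    by (rule part2[OF assms(1) assms(2)])
next
  fix m assume "l \<le> k" "l \<le> m \<and> m < n"
  then show "(\<Sum>s = 0..m. (-1) ^ s
                  * q powi (int (s * (s + 1) div 2) - int s * (int l - int k))
                  * qbin q (n + m - k) s * qbin q (n + m - s) (n + l - s)) = qbin q k l"
    by (intro part3[OF assms(1) assms(2)]) auto
qed

end
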